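(* Let $T>0$ and let $\mathcal{H}$ be a dense subset of $C_K(\mathbb{R})$. Let $z=\{z(u,t),\ u\in[0,1],\ t\in(0,T]\}\in D([0,1],C(0,T])$ satisfy $z(u,t)\le z(v,t)$ for $u<v$, $t\in(0,T]$, and suppose that for all $\varphi\in\mathcal{H}$, $$\int_0^1\varphi(z(u,t))du\to\int_0^1\varphi(u)du,\quad t\to0.$$ Then $\lim_{t\to0}z(u,t)=u$ for each $u\in(0,1)$. Moreover, if $\lim_{t\to0}z(0,t)=0$ and $\lim_{t\to0}z(1,t)=1$, then the extension of $z$ to $[0,1]\times[0,T]$ given by $z(u,0)=u$ belongs to $D([0,1],C[0,T])$.
   Context: $C_K(\mathbb{R})$ is the class of continuous functions on $\mathbb{R}$ with compact support (density is with respect to uniform convergence). $C(0,T]$ is the space of continuous functions on $(0,T]$ with the metric of uniform convergence on compact subsets of $(0,T]$, $C[0,T]$ has the uniform metric, and $D([0,1],E)$ is the Skorohod space of càdlàg maps from $[0,1]$ to $E$. *)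

theory Defs
  imports "HOL-Analysis.Analysis"
begin

definition CK :: "(real \<Rightarrow> real) set" where
  "CK = {\<phi>. continuous_on UNIV \<phi> \<and> compact (closure {x. \<phi> x \<noteq> 0})}"

definition dense_in_CK :: "(real \<Rightarrow> real) set \<Rightarrow> bool" where
  "dense_in_CK H \<longleftrightarrow> H \<subseteq> CK \<and>
     (\<forall>\<phi>\<in>CK. \<forall>\<epsilon>>0. \<exists>\<psi>\<in>H. \<forall>x. \<bar>\<phi> x - \<psi> x\<bar> < \<epsilon>)"

definition right_unif_lim :: "real set \<Rightarrow> (real \<Rightarrow> real \<Rightarrow> real) \<Rightarrow> real \<Rightarrow> (real \<Rightarrow> real) \<Rightarrow> bool" where
  "right_unif_lim S z u g \<longleftrightarrow> (\<forall>\<epsilon>>0. \<exists>\<delta>>0. \<forall>v\<in>{0..1}. u < v \<and> v < u + \<delta> \<longrightarrow>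
      (\<forall>t\<in>S. \<bar>z v t - g t\<bar> < \<epsilon>))"

definition left_unif_lim :: "real set \<Rightarrow> (real \<Rightarrow> real \<Rightarrow> real) \<Rightarrow> real \<Rightarrow> (real \<Rightarrow> real) \<Rightarrow> bool" where
  "left_unif_lim S z u g \<longleftrightarrow> (\<forall>\<epsilon>>0. \<exists>\<delta>>0. \<forall>v\<in>{0..1}. u - \<delta> < v \<and> v < u \<longrightarrow>
      (\<forall>t\<in>S. \<bar>z v t - g t\<bar> < \<epsilon>))"

text \<open>z (as u \<mapsto> z u) belongs to D([0,1], C(0,T]), C(0,T] carrying the topology of
  uniform convergence on compact subsets of (0,T] (i.e. on every [s,T], 0<s\<le>T).\<close>
definition D_C_open :: "real \<Rightarrow> (real \<Rightarrow> real \<Rightarrow> real) \<Rightarrow> bool" where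
  "D_C_open T z \<longleftrightarrow>
     (\<forall>u\<in>{0..1}. continuous_on {0<..T} (z u)) \<and>
     (\<forall>u\<in>{0..<1}. \<forall>s\<in>{0<..T}. right_unif_lim {s..T} z u (z u)) \<and>
     (\<forall>u\<in>{0<..1}. \<exists>g. continuous_on {0<..T} g \<and> (\<forall>s\<in>{0<..T}. left_unif_lim {s..T} z u g))"

text \<open>z belongs to D([0,1], C[0,T]), C[0,T] with the uniform metric.\<close>
definition D_C_closed :: "real \<Rightarrow> (real \<Rightarrow> real \<Rightarrow> real) \<Rightarrow> bool" where
  "D_C_closed T z \<longleftrightarrow>
     (\<forall>u\<in>{0..1}. continuous_on {0..T} (z u)) \<and>
     (\<forall>u\<in>{0..<1}. right_unif_lim {0..T} z u (z u)) \<and>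
     (\<forall>u\<in>{0<..1}. \<exists>g. continuous_on {0..T} g \<and> left_unif_lim {0..T} z u g)"

end

theory Submission
  imports Defs
begin


lemma integ_comp:
  fixes f \<psi> :: "real \<Rightarrow> real"
  assumes m: "mono_on {0..1} f" and c: "continuous_on UNIV \<psi>"
  shows "(\<lambda>u. \<psi> (f u)) integrable_on {0..1}"
proof -
  have "space lborel = space lebesgue" "sets borel \<subseteq> sets lebesgue"
    by force+
  then have fb: "f \<in> borel_measurable (lebesgue_on {0..1})"
    by (metis m borel_measurable_mono_on_fnc borel_measurable_subalgebra mono_restrict_space space_lborel space_restrict_space)
  have pb: "\<psi> \<in> borel_measurable borel"
    using c borel_measurable_continuous_onI by blast
  have mb: "(\<lambda>u. \<psi> (f u)) \<in> borel_measurable (lebesgue_on {0..1})"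
    using measurable_compose[OF fb pb] by (simp add: o_def)
  have "compact (\<psi> ` {f 0..f 1})"
    by (intro compact_continuous_image continuous_on_subset[OF c]) auto
  then obtain B where B: "\<And>y. y \<in> \<psi> ` {f 0..f 1} \<Longrightarrow> norm y \<le> B"
    using compact_imp_bounded bounded_iff by metis
  have "\<And>x. x \<in> {0..1} \<Longrightarrow> norm (\<psi> (f x)) \<le> B"
  proof -
    fix x :: real assume "x \<in> {0..1}"
    then have "f x \<in> {f 0..f 1}" using m by (auto simp: mono_on_def)
    then show "norm (\<psi> (f x)) \<le> B" using B by blast
  qed
  then show ?thesis
    by (intro measurable_bounded_by_integrable_imp_integrable[OF mb, of "\<lambda>_. B"]) auto
qed

lemma int_upper:
  fixes F :: "real \<Rightarrow> real"
  assumes F: "F integrable_on {0..1}" and c: "0 \<le> c" "c \<le> 1"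
    and a: "\<And>x. x \<in> {0..c} \<Longrightarrow> F x \<le> a" and b: "\<And>x. x \<in> {c..1} \<Longrightarrow> F x \<le> b"
  shows "integral {0..1} F \<le> a * c + b * (1 - c)"
proof -
  have "integral {0..1} F = integral {0..c} F + integral {c..1} F"
    using Henstock_Kurzweil_Integration.integral_combine[OF c F] by simp
  moreover have "integral {0..c} F \<le> integral {0..c} (\<lambda>_. a)"
    by (rule integral_le) (use a integrable_subinterval_real[OF F] c in auto)
  moreover have "integral {c..1} F \<le> integral {c..1} (\<lambda>_. b)"
    by (rule integral_le) (use b integrable_subinterval_real[OF F] c in auto)
  ultimately show ?thesis using c by (simp add: mult.commute)
qed

lemma int_lower:
  fixes F :: "real \<Rightarrow> real"
  assumes F: "F integrable_on {0..1}" and c: "0 \<le> c" "c \<le> 1"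
    and a: "\<And>x. x \<in> {0..c} \<Longrightarrow> a \<le> F x" and b: "\<And>x. x \<in> {c..1} \<Longrightarrow> b \<le> F x"
  shows "a * c + b * (1 - c) \<le> integral {0..1} F"
proof -
  have "integral {0..1} F = integral {0..c} F + integral {c..1} F"
    using Henstock_Kurzweil_Integration.integral_combine[OF c F] by simp
  moreover have "integral {0..c} (\<lambda>_. a) \<le> integral {0..c} F"
    by (rule integral_le) (use a integrable_subinterval_real[OF F] c in auto)
  moreover have "integral {c..1} (\<lambda>_. b) \<le> integral {c..1} F"
    by (rule integral_le) (use b integrable_subinterval_real[OF F] c in auto)
  ultimately show ?thesis using c by (simp add: mult.commute)
qed

lemma CK_I:
  fixes \<phi> :: "real \<Rightarrow> real"
  assumes "continuous_on UNIV \<phi>" "\<And>x. x \<notin> {a..b} \<Longrightarrow> \<phi> x = 0"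
  shows "\<phi> \<in> CK"
proof -
  have "{x. \<phi> x \<noteq> 0} \<subseteq> {a..b}" using assms(2) by blast
  then have "closure {x. \<phi> x \<noteq> 0} \<subseteq> {a..b}" by (simp add: closure_minimal)
  then have "compact (closure {x. \<phi> x \<noteq> 0})"
    by (meson closed_closure bounded_closed_interval bounded_subset compact_eq_bounded_closed)
  then show ?thesis using assms(1) by (simp add: CK_def)
qed

lemma mm0: "(A::real) \<le> 0 \<or> B \<le> 0 \<Longrightarrow> max 0 (min 1 (min A B)) = 0" by auto
lemma mm1: "(A::real) \<ge> 1 \<Longrightarrow> B \<ge> 1 \<Longrightarrow> max 0 (min 1 (min A B)) = 1" by auto

lemma part1_up:
  fixes T :: real and H :: "(real \<Rightarrow> real) set" and z :: "real \<Rightarrow> real \<Rightarrow> real"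
  assumes T: "T > 0"
    and H: "dense_in_CK H"
    and mono: "\<And>u v t. 0 \<le> u \<Longrightarrow> u < v \<Longrightarrow> v \<le> 1 \<Longrightarrow> 0 < t \<Longrightarrow> t \<le> T \<Longrightarrow> z u t \<le> z v t"
    and lim: "\<And>\<phi>. \<phi> \<in> H \<Longrightarrow>
          ((\<lambda>t. integral {0..1} (\<lambda>u. \<phi> (z u t))) \<longlongrightarrow> integral {0..1} \<phi>) (at_right 0)"
    and u: "0 \<le> u" and e: "0 < e" "u + e \<le> 1"
  shows "eventually (\<lambda>t. z u t < u + e) (at_right 0)"
proof -
  define \<phi> where "\<phi> x = max 0 (min 1 (min (x+1) ((u+e-x)*2/e)))" for x :: real
  have "continuous_on UNIV \<phi>" unfolding \<phi>_def using e by (intro continuous_intros) auto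
  moreover have "\<phi> x = 0" if "x \<notin> {-1..u+e}" for x
  proof -
    have "x + 1 \<le> 0 \<or> (u+e-x)*2/e \<le> 0" using that e by (auto intro!: divide_nonpos_pos)
    then show ?thesis unfolding \<phi>_def by (rule mm0)
  qed
  ultimately have "\<phi> \<in> CK" by (rule CK_I)
  define \<eta> where "\<eta> = e/8"
  have "\<eta> > 0" using e by (simp add: \<eta>_def)
  then obtain \<psi> where \<psi>H: "\<psi> \<in> H" and \<psi>: "\<And>x. \<bar>\<phi> x - \<psi> x\<bar> < \<eta>"
    using H \<open>\<phi> \<in> CK\<close> unfolding dense_in_CK_def by blast
  have \<psi>c: "continuous_on UNIV \<psi>" using \<psi>H H by (auto simp: dense_in_CK_def CK_def)
  have \<phi>1: "\<phi> x = 1" if "0 \<le> x" "x \<le> u + e/2" for x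
    unfolding \<phi>_def using that e by (intro mm1) (auto simp: field_simps)
  have \<phi>0: "\<phi> x = 0" if "u + e \<le> x" for x
  proof -
    have "(u+e-x)*2/e \<le> 0" using that e by (auto intro!: divide_nonpos_pos)
    then show ?thesis unfolding \<phi>_def by (intro mm0) auto
  qed
  have \<phi>le: "0 \<le> \<phi> x \<and> \<phi> x \<le> 1" for x unfolding \<phi>_def by auto
  have ci: "\<psi> integrable_on {0..1}"
    using \<psi>c by (intro integrable_continuous_real continuous_on_subset[OF \<psi>c]) auto
  have low: "(1 - \<eta>) * (u + e/2) + (-\<eta>) * (1 - (u + e/2)) \<le> integral {0..1} \<psi>"
  proof (rule int_lower[OF ci])
    show "0 \<le> u + e/2" "u + e/2 \<le> 1" using u e by auto
    show "1 - \<eta> \<le> \<psi> x" if "x \<in> {0..u+e/2}" for x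
      using \<phi>1[of x] \<psi>[of x] that by auto
    show "- \<eta> \<le> \<psi> x" for x
      using \<phi>le[of x] \<psi>[of x] by auto
  qed
  have ev1: "eventually (\<lambda>t. dist (integral {0..1} (\<lambda>v. \<psi> (z v t))) (integral {0..1} \<psi>) < \<eta>) (at_right 0)"
    using tendstoD[OF lim[OF \<psi>H] \<open>\<eta> > 0\<close>] .
  have ev2: "eventually (\<lambda>t. 0 < t \<and> t \<le> T) (at_right (0::real))"
    unfolding eventually_at_right_field using T by (intro exI[of _ T]) auto
  show ?thesis
    using ev1 ev2
  proof eventually_elim
    case (elim t)
    show ?case
    proof (rule ccontr)
      assume "\<not> z u t < u + e"
      then have zu: "u + e \<le> z u t" by simp
      have mo: "mono_on {0..1} (\<lambda>v. z v t)"
        unfolding mono_on_def using mono elim by (metis atLeastAtMost_iff order_le_less)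
      have up: "integral {0..1} (\<lambda>v. \<psi> (z v t)) \<le> (1 + \<eta>) * u + \<eta> * (1 - u)"
      proof (rule int_upper[OF integ_comp[OF mo \<psi>c]])
        show "0 \<le> u" "u \<le> 1" using u e by auto
        show "\<psi> (z x t) \<le> 1 + \<eta>" for x using \<phi>le[of "z x t"] \<psi>[of "z x t"] by auto
        show "\<psi> (z x t) \<le> \<eta>" if "x \<in> {u..1}" for x
        proof -
          have "z u t \<le> z x t" using that mono[of u x t] elim u by (cases "u = x") auto
          then have "\<phi> (z x t) = 0" using \<phi>0 zu by auto
          then show ?thesis using \<psi>[of "z x t"] by auto
        qed
      qed
      from elim have "\<bar>integral {0..1} (\<lambda>v. \<psi> (z v t)) - integral {0..1} \<psi>\<bar> < \<eta>"
        by (simp add: dist_real_def)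
      moreover have "(1 + \<eta>) * u + \<eta> * (1 - u) = u + \<eta>" by (simp add: algebra_simps)
      moreover have "(1 - \<eta>) * (u + e/2) + (-\<eta>) * (1 - (u + e/2)) = u + e/2 - \<eta>" by (simp add: field_simps)
      ultimately show False using up low unfolding \<eta>_def using e by linarith
    qed
  qed
qed

lemma part1_down:
  fixes T :: real and H :: "(real \<Rightarrow> real) set" and z :: "real \<Rightarrow> real \<Rightarrow> real"
  assumes T: "T > 0"
    and H: "dense_in_CK H"
    and mono: "\<And>u v t. 0 \<le> u \<Longrightarrow> u < v \<Longrightarrow> v \<le> 1 \<Longrightarrow> 0 < t \<Longrightarrow> t \<le> T \<Longrightarrow> z u t \<le> z v t"
    and lim: "\<And>\<phi>. \<phi> \<in> H \<Longrightarrow>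
          ((\<lambda>t. integral {0..1} (\<lambda>u. \<phi> (z u t))) \<longlongrightarrow> integral {0..1} \<phi>) (at_right 0)"
    and u: "u \<le> 1" and e: "0 < e" "e \<le> u"
  shows "eventually (\<lambda>t. u - e < z u t) (at_right 0)"
proof -
  define \<phi> where "\<phi> x = max 0 (min 1 (min (2 - x) ((x-(u-e))*2/e)))" for x :: real
  have "continuous_on UNIV \<phi>" unfolding \<phi>_def using e by (intro continuous_intros) auto
  moreover have "\<phi> x = 0" if "x \<notin> {u-e..2}" for x
  proof -
    have "2 - x \<le> 0 \<or> (x-(u-e))*2/e \<le> 0" using that e by (auto intro!: divide_nonpos_pos)
    then show ?thesis unfolding \<phi>_def by (rule mm0)
  qed
  ultimately have "\<phi> \<in> CK" by (rule CK_I)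
  define \<eta> where "\<eta> = e/8"
  have "\<eta> > 0" using e by (simp add: \<eta>_def)
  then obtain \<psi> where \<psi>H: "\<psi> \<in> H" and \<psi>: "\<And>x. \<bar>\<phi> x - \<psi> x\<bar> < \<eta>"
    using H \<open>\<phi> \<in> CK\<close> unfolding dense_in_CK_def by blast
  have \<psi>c: "continuous_on UNIV \<psi>" using \<psi>H H by (auto simp: dense_in_CK_def CK_def)
  have \<phi>1: "\<phi> x = 1" if "u - e/2 \<le> x" "x \<le> 1" for x
    unfolding \<phi>_def using that e by (intro mm1) (auto simp: field_simps)
  have \<phi>0: "\<phi> x = 0" if "x \<le> u - e" for x
  proof -
    have "(x-(u-e))*2/e \<le> 0" using that e by (auto intro!: divide_nonpos_pos)
    then show ?thesis unfolding \<phi>_def by (intro mm0) auto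
  qed
  have \<phi>le: "0 \<le> \<phi> x \<and> \<phi> x \<le> 1" for x unfolding \<phi>_def by auto
  have ci: "\<psi> integrable_on {0..1}"
    using \<psi>c by (intro integrable_continuous_real continuous_on_subset[OF \<psi>c]) auto
  have low: "(-\<eta>) * (u - e/2) + (1 - \<eta>) * (1 - (u - e/2)) \<le> integral {0..1} \<psi>"
  proof (rule int_lower[OF ci])
    show "0 \<le> u - e/2" "u - e/2 \<le> 1" using u e by auto
    show "1 - \<eta> \<le> \<psi> x" if "x \<in> {u-e/2..1}" for x
      using \<phi>1[of x] \<psi>[of x] that by auto
    show "- \<eta> \<le> \<psi> x" for x
      using \<phi>le[of x] \<psi>[of x] by auto
  qed
  have ev1: "eventually (\<lambda>t. dist (integral {0..1} (\<lambda>v. \<psi> (z v t))) (integral {0..1} \<psi>) < \<eta>) (at_right 0)"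
    using tendstoD[OF lim[OF \<psi>H] \<open>\<eta> > 0\<close>] .
  have ev2: "eventually (\<lambda>t. 0 < t \<and> t \<le> T) (at_right (0::real))"
    unfolding eventually_at_right_field using T by (intro exI[of _ T]) auto
  show ?thesis
    using ev1 ev2
  proof eventually_elim
    case (elim t)
    show ?case
    proof (rule ccontr)
      assume "\<not> u - e < z u t"
      then have zu: "z u t \<le> u - e" by simp
      have mo: "mono_on {0..1} (\<lambda>v. z v t)"
        unfolding mono_on_def using mono elim by (metis atLeastAtMost_iff order_le_less)
      have up: "integral {0..1} (\<lambda>v. \<psi> (z v t)) \<le> \<eta> * u + (1 + \<eta>) * (1 - u)"
      proof (rule int_upper[OF integ_comp[OF mo \<psi>c]])
        show "0 \<le> u" "u \<le> 1" using u e by auto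
        show "\<psi> (z x t) \<le> 1 + \<eta>" for x using \<phi>le[of "z x t"] \<psi>[of "z x t"] by auto
        show "\<psi> (z x t) \<le> \<eta>" if "x \<in> {0..u}" for x
        proof -
          have "z x t \<le> z u t" using that mono[of x u t] elim u by (cases "u = x") auto
          then have "\<phi> (z x t) = 0" using \<phi>0 zu by auto
          then show ?thesis using \<psi>[of "z x t"] by auto
        qed
      qed
      from elim have "\<bar>integral {0..1} (\<lambda>v. \<psi> (z v t)) - integral {0..1} \<psi>\<bar> < \<eta>"
        by (simp add: dist_real_def)
      moreover have "\<eta> * u + (1 + \<eta>) * (1 - u) = 1 - u + \<eta>" by (simp add: algebra_simps)
      moreover have "(-\<eta>) * (u - e/2) + (1 - \<eta>) * (1 - (u - e/2)) = 1 - u + e/2 - \<eta>" by (simp add: field_simps)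
      ultimately show False using up low unfolding \<eta>_def using e by linarith
    qed
  qed
qed

lemma part1:
  fixes T :: real and H :: "(real \<Rightarrow> real) set" and z :: "real \<Rightarrow> real \<Rightarrow> real"
  assumes T: "T > 0"
    and H: "dense_in_CK H"
    and mono: "\<And>u v t. 0 \<le> u \<Longrightarrow> u < v \<Longrightarrow> v \<le> 1 \<Longrightarrow> 0 < t \<Longrightarrow> t \<le> T \<Longrightarrow> z u t \<le> z v t"
    and lim: "\<And>\<phi>. \<phi> \<in> H \<Longrightarrow>
          ((\<lambda>t. integral {0..1} (\<lambda>u. \<phi> (z u t))) \<longlongrightarrow> integral {0..1} \<phi>) (at_right 0)"
    and u: "0 < u" "u < 1"
  shows "(z u \<longlongrightarrow> u) (at_right 0)"
proof (rule tendstoI)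
  fix e :: real assume e: "0 < e"
  define e' where "e' = min e (min u (1 - u))"
  have e': "0 < e'" "e' \<le> u" "u + e' \<le> 1" "e' \<le> e" using e u by (auto simp: e'_def)
  have "eventually (\<lambda>t. z u t < u + e') (at_right 0)"
    by (rule part1_up[OF T H mono lim]) (use e' u in auto)
  moreover have "eventually (\<lambda>t. u - e' < z u t) (at_right 0)"
    by (rule part1_down[OF T H mono lim]) (use e' u in auto)
  ultimately show "eventually (\<lambda>t. dist (z u t) u < e) (at_right 0)"
    by eventually_elim (use e' in \<open>auto simp: dist_real_def\<close>)
qed



lemma cont_ext:
  fixes f :: "real \<Rightarrow> real"
  assumes T: "T > 0" and c: "continuous_on {0<..T} f" and l: "(f \<longlongrightarrow> a) (at_right 0)"
  shows "continuous_on {0..T} (\<lambda>t. if t = 0 then a else f t)"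
  unfolding continuous_on_eq_continuous_within
proof
  fix x assume x: "x \<in> {0..T}"
  show "continuous (at x within {0..T}) (\<lambda>t. if t = 0 then a else f t)"
  proof (cases "x = 0")
    case True
    have "((\<lambda>t. if t = 0 then a else f t) \<longlongrightarrow> a) (at_right 0)"
      by (rule Lim_transform_eventually[OF l]) (auto simp: eventually_at_filter)
    then show ?thesis using True T by (simp add: continuous_within at_within_Icc_at_right)
  next
    case False
    then have x0: "0 < x" "x \<le> T" using x by auto
    have eq: "at x within {0..T} = at x within {0<..T}"
      by (rule at_within_nhd[of _ "{0<..}"]) (use x0 in auto)
    have "(f \<longlongrightarrow> f x) (at x within {0<..T})"
      using c x0 by (simp add: continuous_on_eq_continuous_within continuous_within)
    then have "((\<lambda>t. if t = 0 then a else f t) \<longlongrightarrow> f x) (at x within {0<..T})"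
      by (rule Lim_transform_eventually) (auto simp: eventually_at_filter)
    then show ?thesis using False eq by (simp add: continuous_within)
  qed
qed

lemma ev_s:
  assumes "eventually P (at_right (0::real))" "T > 0"
  shows "\<exists>s. 0 < s \<and> s \<le> T \<and> (\<forall>t. 0 < t \<and> t < s \<longrightarrow> P t)"
proof -
  obtain b where b: "b > 0" "\<And>y. 0 < y \<Longrightarrow> y < b \<Longrightarrow> P y"
    using assms(1) unfolding eventually_at_right_field by auto
  show ?thesis
    by (rule exI[of _ "min b T"]) (use b assms(2) in auto)
qed

lemma part2_right:
  fixes T :: real and z :: "real \<Rightarrow> real \<Rightarrow> real"
  assumes T: "T > 0" and D: "D_C_open T z"
    and mono: "\<And>u v t. 0 \<le> u \<Longrightarrow> u < v \<Longrightarrow> v \<le> 1 \<Longrightarrow> 0 < t \<Longrightarrow> t \<le> T \<Longrightarrow> z u t \<le> z v t"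
    and zl: "\<And>u. u \<in> {0..1} \<Longrightarrow> (z u \<longlongrightarrow> u) (at_right 0)"
    and u: "0 \<le> u" "u < 1"
  shows "right_unif_lim {0..T} (\<lambda>u t. if t = 0 then u else z u t) u (\<lambda>t. if t = 0 then u else z u t)"
  unfolding right_unif_lim_def
proof (intro allI impI)
  fix e :: real assume e: "0 < e"
  define w where "w = min (u + e/4) 1"
  have w: "u < w" "w \<le> 1" "w - u < e/3" using u e unfolding w_def by (auto simp: min_def)
  have "eventually (\<lambda>t. dist (z w t) w < e/3 \<and> dist (z u t) u < e/3) (at_right 0)"
    using tendstoD[OF zl[of w], of "e/3"] tendstoD[OF zl[of u], of "e/3"] w u e
    by (auto intro: eventually_conj)
  then obtain s where s: "0 < s" "s \<le> T"
    and sP: "\<And>t. 0 < t \<Longrightarrow> t < s \<Longrightarrow> dist (z w t) w < e/3 \<and> dist (z u t) u < e/3"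
    using ev_s[OF _ T] by blast
  have "right_unif_lim {s..T} z u (z u)" using D s u unfolding D_C_open_def by auto
  then obtain d1 where d1: "d1 > 0"
    and d1P: "\<And>v t. v \<in> {0..1} \<Longrightarrow> u < v \<Longrightarrow> v < u + d1 \<Longrightarrow> t \<in> {s..T} \<Longrightarrow> \<bar>z v t - z u t\<bar> < e"
    using e unfolding right_unif_lim_def by blast
  show "\<exists>d>0. \<forall>v\<in>{0..1}. u < v \<and> v < u + d \<longrightarrow>
          (\<forall>t\<in>{0..T}. \<bar>(if t = 0 then v else z v t) - (if t = 0 then u else z u t)\<bar> < e)"
  proof (intro exI[of _ "min d1 (w - u)"] conjI ballI impI)
    show "0 < min d1 (w - u)" using d1 w by auto
    fix v t assume v: "v \<in> {0..1}" "u < v \<and> v < u + min d1 (w - u)" and t: "t \<in> {0..T}"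
    show "\<bar>(if t = 0 then v else z v t) - (if t = 0 then u else z u t)\<bar> < e"
    proof (cases "t = 0")
      case True then show ?thesis using v w by auto
    next
      case False
      show ?thesis
      proof (cases "t < s")
        case True
        have t0: "0 < t" "t \<le> T" using t False by auto
        have "z u t \<le> z v t" using mono[of u v t] u v t0 by auto
        moreover have "z v t \<le> z w t" using mono[of v w t] u v w t0 by auto
        moreover have "dist (z w t) w < e/3 \<and> dist (z u t) u < e/3" using sP t0 True by auto
        moreover have "z w t < w + e/3" "u - e/3 < z u t"
          using sP[OF t0(1) True] unfolding dist_real_def by linarith+
        ultimately show ?thesis using False w by auto
      next
        case False': False
        then show ?thesis using d1P[of v t] v t False by auto
      qed
    qed
  qed
qed

lemma g_between:
  fixes z :: "real \<Rightarrow> real \<Rightarrow> real"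
  assumes mono: "\<And>u v t. 0 \<le> u \<Longrightarrow> u < v \<Longrightarrow> v \<le> 1 \<Longrightarrow> 0 < t \<Longrightarrow> t \<le> T \<Longrightarrow> z u t \<le> z v t"
    and L: "left_unif_lim {t..T} z u g" and t: "0 < t" "t \<le> T"
    and w: "0 \<le> w" "w < u" "u \<le> 1"
  shows "z w t \<le> g t \<and> g t \<le> z u t"
proof -
  have key: "\<exists>v. w < v \<and> v < u \<and> \<bar>z v t - g t\<bar> < \<eta>" if eta: "\<eta> > 0" for \<eta>
  proof -
    obtain d where d: "d > 0" and dP: "\<And>v s. v \<in> {0..1} \<Longrightarrow> u - d < v \<Longrightarrow> v < u \<Longrightarrow> s \<in> {t..T} \<Longrightarrow> \<bar>z v s - g s\<bar> < \<eta>"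
      using L eta unfolding left_unif_lim_def by blast
    define v where "v = max ((w+u)/2) (u - d/2)"
    have "w < v" "v < u" "u - d < v" "v \<in> {0..1}" using w d unfolding v_def by (auto simp: max_def)
    then show ?thesis using dP[of v t] t by auto
  qed
  show ?thesis
  proof
    show "z w t \<le> g t"
    proof (rule ccontr)
      assume "\<not> z w t \<le> g t"
      then obtain v where v: "w < v" "v < u" "\<bar>z v t - g t\<bar> < z w t - g t" using key[of "z w t - g t"] by auto
      have "z w t \<le> z v t" using mono[of w v t] v w t by auto
      then show False using v by linarith
    qed
    show "g t \<le> z u t"
    proof (rule ccontr)
      assume "\<not> g t \<le> z u t"
      then obtain v where v: "w < v" "v < u" "\<bar>z v t - g t\<bar> < g t - z u t" using key[of "g t - z u t"] by auto
      have "z v t \<le> z u t" using mono[of v u t] v w t by auto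
      then show False using v by linarith
    qed
  qed
qed

lemma part2_left:
  fixes T :: real and z :: "real \<Rightarrow> real \<Rightarrow> real"
  assumes T: "T > 0" and D: "D_C_open T z"
    and mono: "\<And>u v t. 0 \<le> u \<Longrightarrow> u < v \<Longrightarrow> v \<le> 1 \<Longrightarrow> 0 < t \<Longrightarrow> t \<le> T \<Longrightarrow> z u t \<le> z v t"
    and zl: "\<And>u. u \<in> {0..1} \<Longrightarrow> (z u \<longlongrightarrow> u) (at_right 0)"
    and u: "0 < u" "u \<le> 1"
  shows "\<exists>g. continuous_on {0..T} g \<and> left_unif_lim {0..T} (\<lambda>u t. if t = 0 then u else z u t) u g"
proof -
  obtain g where gc: "continuous_on {0<..T} g" and gL: "\<And>s. s \<in> {0<..T} \<Longrightarrow> left_unif_lim {s..T} z u g"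
  proof -
    have "u \<in> {0<..1}" using u by auto
    then show ?thesis using D that unfolding D_C_open_def by blast
  qed
  have gb: "z w t \<le> g t \<and> g t \<le> z u t" if "0 < t" "t \<le> T" "0 \<le> w" "w < u" for w t
    using g_between[OF mono gL[of t] that(1,2) that(3,4) u(2)] that by auto
  have gl: "(g \<longlongrightarrow> u) (at_right 0)"
  proof (rule tendstoI)
    fix e :: real assume e: "0 < e"
    define w where "w = max 0 (u - e/2)"
    have w: "0 \<le> w" "w < u" "u - e/2 \<le> w" "w \<le> 1" using u e unfolding w_def by (auto simp: max_def)
    have "eventually (\<lambda>t. (dist (z w t) w < e/2 \<and> dist (z u t) u < e) \<and> (0 < t \<and> t \<le> T)) (at_right 0)"
      using tendstoD[OF zl[of w], of "e/2"] tendstoD[OF zl[of u], of "e"] w u e T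
      by (intro eventually_conj) (auto simp: eventually_at_right_field intro!: exI[of _ T])
    then show "eventually (\<lambda>t. dist (g t) u < e) (at_right 0)"
    proof (rule eventually_mono)
      fix t assume a: "(dist (z w t) w < e/2 \<and> dist (z u t) u < e) \<and> (0 < t \<and> t \<le> T)"
      then have "z w t \<le> g t \<and> g t \<le> z u t" using gb w by auto
      moreover have "w - e/2 < z w t" "z u t < u + e" using a unfolding dist_real_def by linarith+
      ultimately show "dist (g t) u < e" using w unfolding dist_real_def by linarith
    qed
  qed
  show ?thesis
  proof (intro exI[of _ "\<lambda>t. if t = 0 then u else g t"] conjI)
    show "continuous_on {0..T} (\<lambda>t. if t = 0 then u else g t)"
      by (rule cont_ext[OF T gc gl])
    show "left_unif_lim {0..T} (\<lambda>u t. if t = 0 then u else z u t) u (\<lambda>t. if t = 0 then u else g t)"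
      unfolding left_unif_lim_def
    proof (intro allI impI)
      fix e :: real assume e: "0 < e"
      define w where "w = max 0 (u - e/4)"
      have w: "0 \<le> w" "w < u" "u - w < e/3" "w \<le> 1" using u e unfolding w_def by (auto simp: max_def)
      have "eventually (\<lambda>t. dist (z w t) w < e/3 \<and> dist (z u t) u < e/3) (at_right 0)"
        using tendstoD[OF zl[of w], of "e/3"] tendstoD[OF zl[of u], of "e/3"] w u e
        by (auto intro: eventually_conj)
      then obtain s where s: "0 < s" "s \<le> T"
        and sP: "\<And>t. 0 < t \<Longrightarrow> t < s \<Longrightarrow> dist (z w t) w < e/3 \<and> dist (z u t) u < e/3"
        using ev_s[OF _ T] by blast
      obtain d1 where d1: "d1 > 0"
        and d1P: "\<And>v t. v \<in> {0..1} \<Longrightarrow> u - d1 < v \<Longrightarrow> v < u \<Longrightarrow> t \<in> {s..T} \<Longrightarrow> \<bar>z v t - g t\<bar> < e"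
        using gL[of s] s e unfolding left_unif_lim_def by force
      show "\<exists>d>0. \<forall>v\<in>{0..1}. u - d < v \<and> v < u \<longrightarrow>
              (\<forall>t\<in>{0..T}. \<bar>(if t = 0 then v else z v t) - (if t = 0 then u else g t)\<bar> < e)"
      proof (intro exI[of _ "min d1 (u - w)"] conjI ballI impI)
        show "0 < min d1 (u - w)" using d1 w by auto
        fix v t assume v: "v \<in> {0..1}" "u - min d1 (u - w) < v \<and> v < u" and t: "t \<in> {0..T}"
        show "\<bar>(if t = 0 then v else z v t) - (if t = 0 then u else g t)\<bar> < e"
        proof (cases "t = 0")
          case True then show ?thesis using v w by auto
        next
          case False
          show ?thesis
          proof (cases "t < s")
            case True
            have t0: "0 < t" "t \<le> T" using t False by auto
            have wv: "w < v" using v by auto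
            have "z w t \<le> z v t" using mono[of w v t] w v wv t0 by auto
            moreover have "z v t \<le> z u t" using mono[of v u t] u v t0 by auto
            moreover have "z w t \<le> g t \<and> g t \<le> z u t" using gb[OF t0 w(1,2)] .
            moreover have "z u t < u + e/3" "w - e/3 < z w t"
              using sP[OF t0(1) True] unfolding dist_real_def by linarith+
            ultimately show ?thesis using False w by auto
          next
            case False': False
            then show ?thesis using d1P[of v t] v t False by auto
          qed
        qed
      qed
    qed
  qed
qed


theorem lemma2p8:
  fixes T :: real and H :: "(real \<Rightarrow> real) set" and z :: "real \<Rightarrow> real \<Rightarrow> real"
  assumes "T > 0"
    and "dense_in_CK H"
    and "D_C_open T z"
    and "\<And>u v t. 0 \<le> u \<Longrightarrow> u < v \<Longrightarrow> v \<le> 1 \<Longrightarrow> 0 < t \<Longrightarrow> t \<le> T \<Longrightarrow> z u t \<le> z v t"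
    and "\<And>\<phi>. \<phi> \<in> H \<Longrightarrow>
          ((\<lambda>t. integral {0..1} (\<lambda>u. \<phi> (z u t))) \<longlongrightarrow> integral {0..1} \<phi>) (at_right 0)"
  shows "(\<forall>u\<in>{0<..<1}. (z u \<longlongrightarrow> u) (at_right 0)) \<and>
         ((z 0 \<longlongrightarrow> 0) (at_right 0) \<and> (z 1 \<longlongrightarrow> 1) (at_right 0) \<longrightarrow>
            D_C_closed T (\<lambda>u t. if t = 0 then u else z u t))"
proof
  have P1: "\<forall>u\<in>{0<..<1}. (z u \<longlongrightarrow> u) (at_right 0)"
    using part1[OF assms(1,2,4,5)] by auto
  then show "\<forall>u\<in>{0<..<1}. (z u \<longlongrightarrow> u) (at_right 0)" .
  show "(z 0 \<longlongrightarrow> 0) (at_right 0) \<and> (z 1 \<longlongrightarrow> 1) (at_right 0) \<longrightarrow>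
            D_C_closed T (\<lambda>u t. if t = 0 then u else z u t)"
  proof
    assume E: "(z 0 \<longlongrightarrow> 0) (at_right 0) \<and> (z 1 \<longlongrightarrow> 1) (at_right 0)"
    have zl: "(z u \<longlongrightarrow> u) (at_right 0)" if "u \<in> {0..1}" for u
    proof -
      have "u = 0 \<or> u = 1 \<or> u \<in> {0<..<1}" using that by auto
      then show ?thesis using E P1 by auto
    qed
    show "D_C_closed T (\<lambda>u t. if t = 0 then u else z u t)"
      unfolding D_C_closed_def
    proof (intro conjI ballI)
      fix u :: real assume u: "u \<in> {0..1}"
      have "continuous_on {0<..T} (z u)" using assms(3) u unfolding D_C_open_def by auto
      then show "continuous_on {0..T} ((\<lambda>u t. if t = 0 then u else z u t) u)"
        using cont_ext[OF assms(1) _ zl[OF u]] by simp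
    next
      fix u :: real assume u: "u \<in> {0..<1}"
      then show "right_unif_lim {0..T} (\<lambda>u t. if t = 0 then u else z u t) u
          ((\<lambda>u t. if t = 0 then u else z u t) u)"
        using part2_right[OF assms(1,3,4) zl] by auto
    next
      fix u :: real assume u: "u \<in> {0<..1}"
      then show "\<exists>g. continuous_on {0..T} g \<and> left_unif_lim {0..T} (\<lambda>u t. if t = 0 then u else z u t) u g"
        using part2_left[OF assms(1,3,4) zl] by auto
    qed
  qed
qed

end
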